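(* Let $\kappa>0$, let $Z$ be a $\kappa$-self-similar Markov martingale, let $\zeta$ be a subordinator independent of $Z$ whose Laplace exponent $\psi$ satisfies $\psi(\kappa)=\kappa$, and let $X$ be the process associated with $Z$ and $\zeta$ (defined in the context). If $Z$ is continuous in probability, then $X$ is continuous in probability: for every $t\ge0$ and every $c>0$, $\lim_{s\to t}\mathbb{P}(|X_t-X_s|>c)=0$.
   Context: $Z=(Z_t)_{t\ge0}$ is a real-valued càdlàg Markov process which is $\kappa$-self-similar ($(Z_{ct})_{t\ge0}\stackrel{d}{=}(c^\kappa Z_t)_{t\ge0}$ for all $c>0$) and a martingale. A subordinator $\zeta$ (nonnegative independent stationary increments, $\zeta_0=0$) has Laplace exponent $\psi$ defined by $\mathbb{E}[e^{-\lambda\zeta_a}]=e^{-a\psi(\lambda)}$. The process $X$ associated with $Z$ and $\zeta$ is the process $(X_t)_{t\ge0}$, $X_0=0$, such that for every $a\in\mathbb{R}$, $(X_t)_{t\ge e^{-a}}$ has the same finite-dimensional distributions as $(t^{\kappa}e^{-\kappa\zeta_{a+\ln t}}Z_{e^{\zeta_{a+\ln t}}})_{t\ge e^{-a}}$. *)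

theory Defs
  imports "HOL-Probability.Probability"
begin

text \<open>Processes are modelled as functions  real => 'a => real  on a measure space;
  only times t >= 0 are relevant.\<close>

definition fdd_eq :: "'a measure \<Rightarrow> (real \<Rightarrow> 'a \<Rightarrow> real) \<Rightarrow> 'b measure \<Rightarrow> (real \<Rightarrow> 'b \<Rightarrow> real) \<Rightarrow> real set \<Rightarrow> bool" where
  "fdd_eq M Y N W T \<longleftrightarrow>
     (\<forall>(n::nat) (ts::nat \<Rightarrow> real). (\<forall>i<n. ts i \<in> T) \<longrightarrow>
        distr M (PiM {..<n} (\<lambda>_. borel)) (\<lambda>\<omega>. \<lambda>i\<in>{..<n}. Y (ts i) \<omega>)
      = distr N (PiM {..<n} (\<lambda>_. borel)) (\<lambda>\<omega>. \<lambda>i\<in>{..<n}. W (ts i) \<omega>))"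

definition gen_sigma :: "'a measure \<Rightarrow> (real \<Rightarrow> 'a \<Rightarrow> real) \<Rightarrow> real set \<Rightarrow> 'a measure" where
  "gen_sigma M Y I = sigma (space M) {Y r -` B \<inter> space M | r B. r \<in> I \<and> B \<in> sets borel}"

definition nat_filt :: "'a measure \<Rightarrow> (real \<Rightarrow> 'a \<Rightarrow> real) \<Rightarrow> real \<Rightarrow> 'a measure" where
  "nat_filt M Y s = gen_sigma M Y {0..s}"

definition is_process :: "'a measure \<Rightarrow> (real \<Rightarrow> 'a \<Rightarrow> real) \<Rightarrow> bool" where
  "is_process M Y \<longleftrightarrow> (\<forall>t\<ge>0. Y t \<in> borel_measurable M)"

definition cadlag :: "'a measure \<Rightarrow> (real \<Rightarrow> 'a \<Rightarrow> real) \<Rightarrow> bool" where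
  "cadlag M Y \<longleftrightarrow> (\<forall>\<omega>\<in>space M. \<forall>t\<ge>0.
      continuous (at_right t) (\<lambda>s. Y s \<omega>) \<and> (t > 0 \<longrightarrow> (\<exists>l. ((\<lambda>s. Y s \<omega>) \<longlongrightarrow> l) (at_left t))))"

definition martingale_proc :: "'a measure \<Rightarrow> (real \<Rightarrow> 'a \<Rightarrow> real) \<Rightarrow> bool" where
  "martingale_proc M Y \<longleftrightarrow> is_process M Y \<and> (\<forall>t\<ge>0. integrable M (Y t)) \<and>
     (\<forall>s t. 0 \<le> s \<and> s \<le> t \<longrightarrow>
        (AE \<omega> in M. real_cond_exp M (nat_filt M Y s) (Y t) \<omega> = Y s \<omega>))"

definition markov_proc :: "'a measure \<Rightarrow> (real \<Rightarrow> 'a \<Rightarrow> real) \<Rightarrow> bool" where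
  "markov_proc M Y \<longleftrightarrow> is_process M Y \<and>
     (\<forall>s t (f::real \<Rightarrow> real). 0 \<le> s \<and> s \<le> t \<and> f \<in> borel_measurable borel \<and> bounded (range f) \<longrightarrow>
        (AE \<omega> in M. real_cond_exp M (nat_filt M Y s) (\<lambda>\<omega>. f (Y t \<omega>)) \<omega>
                   = real_cond_exp M (gen_sigma M Y {s}) (\<lambda>\<omega>. f (Y t \<omega>)) \<omega>))"

definition self_similar :: "'a measure \<Rightarrow> real \<Rightarrow> (real \<Rightarrow> 'a \<Rightarrow> real) \<Rightarrow> bool" where
  "self_similar M \<kappa> Y \<longleftrightarrow> (\<forall>c>0. fdd_eq M (\<lambda>t. Y (c * t)) M (\<lambda>t \<omega>. c powr \<kappa> * Y t \<omega>) {0..})"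

definition subordinator :: "'a measure \<Rightarrow> (real \<Rightarrow> 'a \<Rightarrow> real) \<Rightarrow> bool" where
  "subordinator M \<zeta> \<longleftrightarrow> is_process M \<zeta> \<and>
     (\<forall>\<omega>\<in>space M. \<zeta> 0 \<omega> = 0 \<and> (\<forall>t\<ge>0. \<zeta> t \<omega> \<ge> 0)) \<and>
     (\<forall>(n::nat) (ts::nat \<Rightarrow> real). 0 \<le> ts 0 \<and> (\<forall>i<n. ts i < ts (Suc i)) \<longrightarrow>
        prob_space.indep_vars M (\<lambda>_. borel) (\<lambda>i \<omega>. \<zeta> (ts (Suc i)) \<omega> - \<zeta> (ts i) \<omega>) {..<n}) \<and>
     (\<forall>s h. 0 \<le> s \<and> 0 \<le> h \<longrightarrow>
        distr M borel (\<lambda>\<omega>. \<zeta> (s + h) \<omega> - \<zeta> s \<omega>) = distr M borel (\<zeta> h))"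

definition laplace_exponent :: "'a measure \<Rightarrow> (real \<Rightarrow> 'a \<Rightarrow> real) \<Rightarrow> (real \<Rightarrow> real) \<Rightarrow> bool" where
  "laplace_exponent M \<zeta> \<psi> \<longleftrightarrow>
     (\<forall>a l. 0 \<le> a \<and> 0 \<le> l \<longrightarrow>
        prob_space.expectation M (\<lambda>\<omega>. exp (- l * \<zeta> a \<omega>)) = exp (- a * \<psi> l))"

definition indep_procs :: "'a measure \<Rightarrow> (real \<Rightarrow> 'a \<Rightarrow> real) \<Rightarrow> (real \<Rightarrow> 'a \<Rightarrow> real) \<Rightarrow> bool" where
  "indep_procs M Y W \<longleftrightarrow>
     prob_space.indep_set M (sets (gen_sigma M Y {0..})) (sets (gen_sigma M W {0..}))"

definition associated_proc :: "'a measure \<Rightarrow> real \<Rightarrow> (real \<Rightarrow> 'a \<Rightarrow> real) \<Rightarrow> (real \<Rightarrow> 'a \<Rightarrow> real)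
      \<Rightarrow> 'b measure \<Rightarrow> (real \<Rightarrow> 'b \<Rightarrow> real) \<Rightarrow> bool" where
  "associated_proc M \<kappa> Z \<zeta> N X \<longleftrightarrow>
     (\<forall>\<omega>\<in>space N. X 0 \<omega> = 0) \<and>
     (\<forall>a::real. fdd_eq N X M
        (\<lambda>t \<omega>. t powr \<kappa> * exp (- \<kappa> * \<zeta> (a + ln t) \<omega>) * Z (exp (\<zeta> (a + ln t) \<omega>)) \<omega>)
        {exp (- a)..})"

definition cont_in_prob :: "'a measure \<Rightarrow> (real \<Rightarrow> 'a \<Rightarrow> real) \<Rightarrow> bool" where
  "cont_in_prob M Y \<longleftrightarrow> (\<forall>t\<ge>0. \<forall>c>0.
     ((\<lambda>s. measure M {\<omega>\<in>space M. \<bar>Y t \<omega> - Y s \<omega>\<bar> > c}) \<longlongrightarrow> 0) (at t within {0..}))"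

end

theory Submission
  imports Defs
begin

lemma emeasure_distr_le:
  assumes "B \<in> sets N" "f -` B \<inter> space M \<subseteq> T" "T \<in> sets M"
  shows "emeasure (distr M N f) B \<le> emeasure M T"
proof -
  have ss: "sigma_sets (space N) (sets N) = sets N" by (rule sets.sigma_sets_eq)
  show ?thesis
    unfolding distr_def emeasure_measure_of_conv ss
    using assms emeasure_mono by auto
qed

lemma small_decseq:
  assumes "finite_measure M" "range A \<subseteq> sets M" "decseq A" "(\<Inter>i. A i) = {}" "0 < (e::real)"
  shows "\<exists>n. measure M (A n) < e"
proof -
  interpret finite_measure M by fact
  have "(\<lambda>n. measure M (A n)) \<longlonglongrightarrow> 0"
    using finite_Lim_measure_decseq[OF assms(2,3)] assms(4) by simp
  from order_tendstoD(2)[OF this assms(5)] show ?thesis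
    by (auto dest: eventually_happens)
qed

lemma one_minus_exp_le: "1 - exp (- (x::real)) \<le> x"
  using exp_ge_add_one_self[of "-x"] by simp

lemma rc_good:
  assumes "cadlag M Z" "\<omega> \<in> space M" "0 \<le> x" "e < \<bar>Z x \<omega> - Z 1 \<omega>\<bar>" "x < u"
  shows "\<exists>q\<in>\<rat>. x < q \<and> q < u \<and> e < \<bar>Z q \<omega> - Z 1 \<omega>\<bar>"
proof -
  have "continuous (at_right x) (\<lambda>s. Z s \<omega>)" using assms(1-3) unfolding cadlag_def by auto
  hence "((\<lambda>s. Z s \<omega>) \<longlongrightarrow> Z x \<omega>) (at_right x)" by (simp add: continuous_within)
  hence "\<forall>\<^sub>F y in at_right x. dist (Z y \<omega>) (Z x \<omega>) < \<bar>Z x \<omega> - Z 1 \<omega>\<bar> - e"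
    using assms(4) by (intro tendstoD) auto
  then obtain b where b: "b > x" "\<And>y. y > x \<Longrightarrow> y < b \<Longrightarrow> dist (Z y \<omega>) (Z x \<omega>) < \<bar>Z x \<omega> - Z 1 \<omega>\<bar> - e"
    unfolding eventually_at_right_field by blast
  obtain q where q: "q \<in> \<rat>" "x < q" "q < min b u" using Rats_dense_in_real[of x "min b u"] b assms(5) by auto
  have "dist (Z q \<omega>) (Z x \<omega>) < \<bar>Z x \<omega> - Z 1 \<omega>\<bar> - e" using b q by auto
  hence "e < \<bar>Z q \<omega> - Z 1 \<omega>\<bar>" unfolding dist_real_def by linarith
  thus ?thesis using q by auto
qed

lemma rc_sets:
  fixes Z :: "real \<Rightarrow> 'a \<Rightarrow> real"
  assumes "cadlag M Z" "is_process M Z" "finite_measure M" "e > 0" "\<eta> > 0"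
  shows "\<exists>\<delta>>0. \<exists>B\<in>sets M. measure M B < \<eta> \<and>
           (\<forall>\<omega>\<in>space M - B. \<forall>x. 1 \<le> x \<and> x < 1 + \<delta> \<longrightarrow> \<bar>Z x \<omega> - Z 1 \<omega>\<bar> \<le> e)"
proof -
  define A where "A n = (\<Union>q\<in>\<rat> \<inter> {1..<1 + 1 / real (Suc n)}. {\<omega>\<in>space M. e < \<bar>Z q \<omega> - Z 1 \<omega>\<bar>})" for n
  have meas: "{\<omega>\<in>space M. e < \<bar>Z q \<omega> - Z 1 \<omega>\<bar>} \<in> sets M" if "q \<ge> 0" for q
  proof -
    have [measurable]: "Z q \<in> borel_measurable M" "Z 1 \<in> borel_measurable M"
      using assms(2) that unfolding is_process_def by auto
    show ?thesis by measurable
  qed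
  have Asets: "range A \<subseteq> sets M"
  proof safe
    fix n
    have "countable (\<rat> \<inter> {1..<1 + 1 / real (Suc n)})" using countable_rat by auto
    thus "A n \<in> sets M" unfolding A_def
      by (intro sets.countable_UN') (auto intro!: meas)
  qed
  have dec: "decseq A"
    unfolding decseq_def A_def
  proof (intro allI impI subsetI)
    fix m n :: nat and \<omega> assume mn: "m \<le> n" and "\<omega> \<in> (\<Union>q\<in>\<rat> \<inter> {1..<1 + 1 / real (Suc n)}. {\<omega> \<in> space M. e < \<bar>Z q \<omega> - Z 1 \<omega>\<bar>})"
    then obtain q where q: "q \<in> \<rat>" "1 \<le> q" "q < 1 + 1 / real (Suc n)" "\<omega> \<in> space M" "e < \<bar>Z q \<omega> - Z 1 \<omega>\<bar>" by auto
    have "1 / real (Suc n) \<le> 1 / real (Suc m)" using mn by (simp add: frac_le)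
    thus "\<omega> \<in> (\<Union>q\<in>\<rat> \<inter> {1..<1 + 1 / real (Suc m)}. {\<omega> \<in> space M. e < \<bar>Z q \<omega> - Z 1 \<omega>\<bar>})"
      using q by auto
  qed
  have empty: "(\<Inter>n. A n) = {}"
  proof (rule ccontr)
    assume "(\<Inter>n. A n) \<noteq> {}"
    then obtain \<omega> where w: "\<And>n. \<omega> \<in> A n" by auto
    hence wsp: "\<omega> \<in> space M" unfolding A_def by auto
    have "continuous (at_right 1) (\<lambda>s. Z s \<omega>)" using assms(1) wsp unfolding cadlag_def by auto
    hence "((\<lambda>s. Z s \<omega>) \<longlongrightarrow> Z 1 \<omega>) (at_right 1)" by (simp add: continuous_within)
    hence "\<forall>\<^sub>F y in at_right 1. dist (Z y \<omega>) (Z 1 \<omega>) < e"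
      using assms(4) by (intro tendstoD) auto
    then obtain b where b: "b > 1" "\<And>y. y > 1 \<Longrightarrow> y < b \<Longrightarrow> dist (Z y \<omega>) (Z 1 \<omega>) < e"
      unfolding eventually_at_right_field by blast
    obtain n where n: "inverse (real (Suc n)) < b - 1" using reals_Archimedean[of "b - 1"] b by auto
    from w[of n] obtain q where q: "1 \<le> q" "q < 1 + 1 / real (Suc n)" "e < \<bar>Z q \<omega> - Z 1 \<omega>\<bar>"
      unfolding A_def by auto
    show False
    proof (cases "q = 1")
      case True thus False using q assms(4) by simp
    next
      case False
      have "1 / real (Suc n) < b - 1" using n by (simp add: inverse_eq_divide)
      hence "q < b" using q by linarith
      hence "dist (Z q \<omega>) (Z 1 \<omega>) < e" using b(2)[of q] q False by simp
      thus False using q unfolding dist_real_def by simp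
    qed
  qed
  obtain n where n: "measure M (A n) < \<eta>"
    using small_decseq[OF assms(3) Asets dec empty assms(5)] by auto
  show ?thesis
  proof (intro exI[of _ "1 / real (Suc n)"] conjI bexI[of _ "A n"] ballI allI impI)
    show "A n \<in> sets M" using Asets by auto
    show "measure M (A n) < \<eta>" by fact
    fix \<omega> x assume w: "\<omega> \<in> space M - A n" and x: "1 \<le> x \<and> x < 1 + 1 / real (Suc n)"
    show "\<bar>Z x \<omega> - Z 1 \<omega>\<bar> \<le> e"
    proof (rule ccontr)
      assume "\<not> ?thesis"
      then obtain q where "q \<in> \<rat>" "x < q" "q < 1 + 1 / real (Suc n)" "e < \<bar>Z q \<omega> - Z 1 \<omega>\<bar>"
        using rc_good[OF assms(1), of \<omega> x e "1 + 1 / real (Suc n)"] w x by auto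
      hence "\<omega> \<in> A n" using w x unfolding A_def by auto
      thus False using w by auto
    qed
  qed simp
qed

lemma tail_rv:
  assumes "prob_space M" "Y \<in> borel_measurable M" "0 < (\<eta>::real)"
  shows "\<exists>K::nat. measure M {\<omega>\<in>space M. real K < \<bar>Y \<omega>\<bar>} < \<eta>"
proof -
  interpret prob_space M by fact
  define A where "A n = {\<omega>\<in>space M. real n < \<bar>Y \<omega>\<bar>}" for n :: nat
  have [measurable]: "Y \<in> borel_measurable M" by fact
  have "range A \<subseteq> sets M" unfolding A_def by auto
  moreover have "decseq A" unfolding decseq_def A_def by auto
  moreover have "(\<Inter>n. A n) = {}"
  proof safe
    fix x assume "x \<in> (\<Inter>n. A n)"
    moreover obtain n where "\<bar>Y x\<bar> < real n" using reals_Archimedean2 by blast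
    ultimately show "x \<in> {}" unfolding A_def by (auto dest: spec[of _ n])
  qed
  ultimately show ?thesis using small_decseq[of M A \<eta>] assms(3) finite_measure_axioms
    unfolding A_def by auto
qed

lemma tail_sub:
  assumes "prob_space M" "subordinator M \<zeta>" "laplace_exponent M \<zeta> \<psi>" "\<psi> \<kappa> = \<kappa>" "\<kappa> > 0"
    "0 \<le> h" "0 < \<rho>"
  shows "measure M {\<omega>\<in>space M. \<rho> \<le> \<zeta> h \<omega>} \<le> \<kappa> * h / (1 - exp (- \<kappa> * \<rho>))"
proof -
  interpret prob_space M by fact
  have [measurable]: "\<zeta> h \<in> borel_measurable M" using assms(2,6) unfolding subordinator_def is_process_def by auto
  have nn: "\<And>\<omega>. \<omega> \<in> space M \<Longrightarrow> 0 \<le> \<zeta> h \<omega>" using assms(2,6) unfolding subordinator_def by auto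
  define u where "u \<omega> = 1 - exp (- \<kappa> * \<zeta> h \<omega>)" for \<omega>
  have [measurable]: "u \<in> borel_measurable M" unfolding u_def by measurable
  have ie: "integrable M (\<lambda>\<omega>. exp (- \<kappa> * \<zeta> h \<omega>))"
  proof (rule integrable_const_bound[where B=1])
    show "AE x in M. norm (exp (- \<kappa> * \<zeta> h x)) \<le> 1" using nn assms(5) by (auto intro!: AE_I2)
  qed measurable
  have iu: "integrable M u" unfolding u_def using ie by auto
  have Eu: "(\<integral>\<omega>. u \<omega> \<partial>M) = 1 - exp (- h * \<kappa>)"
  proof -
    have "(\<integral>\<omega>. u \<omega> \<partial>M) = (\<integral>\<omega>. 1 \<partial>M) - (\<integral>\<omega>. exp (- \<kappa> * \<zeta> h \<omega>) \<partial>M)"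
      unfolding u_def using ie by (subst Bochner_Integration.integral_diff) auto
    also have "(\<integral>\<omega>. exp (- \<kappa> * \<zeta> h \<omega>) \<partial>M) = exp (- h * \<psi> \<kappa>)"
      using assms(3,5,6) unfolding laplace_exponent_def by auto
    finally show ?thesis using assms(4) prob_space by simp
  qed
  have D: "0 < 1 - exp (- \<kappa> * \<rho>)" using assms(5,7) by simp
  have "measure M {\<omega>\<in>space M. \<rho> \<le> \<zeta> h \<omega>} \<le> measure M {\<omega>\<in>space M. 1 - exp (- \<kappa> * \<rho>) \<le> u \<omega>}"
  proof (rule finite_measure_mono)
    show "{\<omega>\<in>space M. \<rho> \<le> \<zeta> h \<omega>} \<subseteq> {\<omega>\<in>space M. 1 - exp (- \<kappa> * \<rho>) \<le> u \<omega>}"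
      using assms(5) by (auto simp: u_def mult_left_mono)
  qed measurable
  also have "\<dots> \<le> (\<integral>\<omega>. u \<omega> \<partial>M) / (1 - exp (- \<kappa> * \<rho>))"
    by (rule integral_Markov_inequality_measure[OF iu _ _ D, where A="space M"])
       (auto simp: u_def nn assms(5) less_imp_le intro!: AE_I2)
  also have "\<dots> \<le> \<kappa> * h / (1 - exp (- \<kappa> * \<rho>))"
    unfolding Eu using D one_minus_exp_le[of "h * \<kappa>"] by (intro divide_right_mono) (auto simp: mult.commute)
  finally show ?thesis .
qed

lemma pw:
  fixes z1 zx P m C K e \<rho> y c \<kappa> :: real
  assumes "\<kappa> > 0" "0 \<le> y" "y < \<rho>" "\<bar>zx - z1\<bar> \<le> e" "\<bar>z1\<bar> \<le> K" "0 \<le> P" "P \<le> C"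
    "C * e < c / 3" "\<bar>P - m\<bar> * K \<le> c / 3" "C * \<kappa> * \<rho> * K \<le> c / 3"
  shows "\<bar>P * exp (- \<kappa> * y) * zx - m * z1\<bar> \<le> c"
proof -
  define E where "E = exp (- \<kappa> * y)"
  have E0: "0 < E" "E \<le> 1" unfolding E_def using assms(1,2) by auto
  have E1: "1 - E \<le> \<kappa> * \<rho>"
  proof -
    have "1 - E \<le> \<kappa> * y" unfolding E_def using one_minus_exp_le[of "\<kappa> * y"] by simp
    also have "\<dots> \<le> \<kappa> * \<rho>" using assms(1,3) by simp
    finally show ?thesis .
  qed
  have K0: "0 \<le> K" using assms(5) by linarith
  have eq: "P * E * zx - m * z1 = P * E * (zx - z1) + (P * E - m) * z1" by algebra
  have t1: "\<bar>P * E * (zx - z1)\<bar> \<le> C * e"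
  proof -
    have "\<bar>P * E * (zx - z1)\<bar> = P * E * \<bar>zx - z1\<bar>" using E0 assms(6) by (simp add: abs_mult)
    also have "\<dots> \<le> P * 1 * e" using E0 assms(4,6) by (intro mult_mono) auto
    also have "\<dots> \<le> C * e" using assms(4,7) by (simp add: mult_right_mono)
    finally show ?thesis .
  qed
  have d: "\<bar>P * E - m\<bar> \<le> \<bar>P - m\<bar> + C * (\<kappa> * \<rho>)"
  proof -
    have "P * E - m = (P - m) - P * (1 - E)" by algebra
    moreover have "0 \<le> P * (1 - E)" using E0 assms(6) by simp
    ultimately have "\<bar>P * E - m\<bar> \<le> \<bar>P - m\<bar> + P * (1 - E)" by linarith
    also have "P * (1 - E) \<le> C * (\<kappa> * \<rho>)" using E0 E1 assms(6,7)
      by (intro mult_mono) auto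
    finally show ?thesis by simp
  qed
  have t2: "\<bar>(P * E - m) * z1\<bar> \<le> (\<bar>P - m\<bar> + C * (\<kappa> * \<rho>)) * K"
    unfolding abs_mult using d assms(5) by (intro mult_mono) auto
  have "\<bar>P * E * zx - m * z1\<bar> \<le> C * e + (\<bar>P - m\<bar> + C * (\<kappa> * \<rho>)) * K"
    unfolding eq using t1 t2 abs_triangle_ineq[of "P * E * (zx - z1)" "(P * E - m) * z1"] by linarith
  also have "\<dots> = C * e + \<bar>P - m\<bar> * K + C * \<kappa> * \<rho> * K" by (simp add: algebra_simps)
  also have "\<dots> \<le> c" using assms(8,9,10) by linarith
  finally show ?thesis unfolding E_def .
qed

lemma fdd_transfer:
  fixes X :: "real \<Rightarrow> 'b \<Rightarrow> real" and Y :: "real \<Rightarrow> 'a \<Rightarrow> real" and n :: nat and ts :: "nat \<Rightarrow> real"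
  assumes "fdd_eq N X M Y T" "\<forall>i<n. ts i \<in> T" "\<forall>i<n. X (ts i) \<in> borel_measurable N"
    "{f \<in> space (PiM {..<n} (\<lambda>_. borel)). P f} \<in> sets (PiM {..<n} (\<lambda>_. borel))"
    "{\<omega>\<in>space M. P (\<lambda>i\<in>{..<n}. Y (ts i) \<omega>)} \<subseteq> S" "S \<in> sets M"
  shows "emeasure N {\<omega>\<in>space N. P (\<lambda>i\<in>{..<n}. X (ts i) \<omega>)} \<le> emeasure M S"
proof -
  let ?P = "PiM {..<n} (\<lambda>_. borel :: real measure)"
  let ?B = "{f \<in> space ?P. P f}"
  have mN: "(\<lambda>\<omega>. \<lambda>i\<in>{..<n}. X (ts i) \<omega>) \<in> measurable N ?P"
    using assms(3) by (intro measurable_restrict) auto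
  have "emeasure N {\<omega>\<in>space N. P (\<lambda>i\<in>{..<n}. X (ts i) \<omega>)}
      = emeasure N ((\<lambda>\<omega>. \<lambda>i\<in>{..<n}. X (ts i) \<omega>) -` ?B \<inter> space N)"
    using measurable_space[OF mN] by (intro arg_cong[where f="emeasure N"]) auto
  also have "\<dots> = emeasure (distr N ?P (\<lambda>\<omega>. \<lambda>i\<in>{..<n}. X (ts i) \<omega>)) ?B"
    using mN assms(4) by (simp add: emeasure_distr)
  also have "\<dots> = emeasure (distr M ?P (\<lambda>\<omega>. \<lambda>i\<in>{..<n}. Y (ts i) \<omega>)) ?B"
    using assms(1,2) unfolding fdd_eq_def by simp
  also have "\<dots> \<le> emeasure M S"
    using assms(4,5,6) by (intro emeasure_distr_le) auto
  finally show ?thesis .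
qed

lemma tendsto_measure0:
  assumes "\<And>\<eta>. \<eta> > 0 \<Longrightarrow> eventually (\<lambda>s. measure N (S s) < \<eta>) F"
  shows "((\<lambda>s. measure N (S s)) \<longlongrightarrow> 0) F"
  unfolding tendsto_iff dist_real_def
proof (intro allI impI)
  fix e :: real assume "e > 0"
  from assms[OF this] show "eventually (\<lambda>s. \<bar>measure N (S s) - 0\<bar> < e) F"
    by (rule eventually_mono) auto
qed

lemma set_meas_diff:
  "{f \<in> space (PiM {..<2::nat} (\<lambda>_. borel)). (c::real) < \<bar>f 0 - f 1\<bar>} \<in> sets (PiM {..<2::nat} (\<lambda>_. borel))"
proof -
  have [measurable]: "(\<lambda>f. f 0) \<in> borel_measurable (PiM {..<2::nat} (\<lambda>_. borel :: real measure))"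
    by (rule measurable_component_singleton) simp
  have [measurable]: "(\<lambda>f. f 1) \<in> borel_measurable (PiM {..<2::nat} (\<lambda>_. borel :: real measure))"
    by (rule measurable_component_singleton) simp
  show ?thesis by measurable
qed

lemma set_meas_one:
  "{f \<in> space (PiM {..<1::nat} (\<lambda>_. borel)). (c::real) < \<bar>f 0\<bar>} \<in> sets (PiM {..<1::nat} (\<lambda>_. borel))"
proof -
  have [measurable]: "(\<lambda>f. f 0) \<in> borel_measurable (PiM {..<1::nat} (\<lambda>_. borel :: real measure))"
    by (rule measurable_component_singleton) simp
  show ?thesis by measurable
qed

lemma case_zero:
  fixes M :: "'a measure" and N :: "'b measure"
    and \<kappa> :: real and Z \<zeta> :: "real \<Rightarrow> 'a \<Rightarrow> real" and X :: "real \<Rightarrow> 'b \<Rightarrow> real"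
  assumes "prob_space M" "prob_space N" "\<kappa> > 0" "is_process M Z" "subordinator M \<zeta>"
    "is_process N X" "associated_proc M \<kappa> Z \<zeta> N X" "c > 0"
  shows "((\<lambda>s. measure N {\<omega>\<in>space N. c < \<bar>X 0 \<omega> - X s \<omega>\<bar>}) \<longlongrightarrow> 0) (at 0 within {0..})"
proof (rule tendsto_measure0)
  interpret M: prob_space M by fact
  interpret N: prob_space N by fact
  fix \<eta> :: real assume "\<eta> > 0"
  have Z1: "Z 1 \<in> borel_measurable M" using assms(4) unfolding is_process_def by auto
  obtain K :: nat where K: "measure M {\<omega>\<in>space M. real K < \<bar>Z 1 \<omega>\<bar>} < \<eta>"
    using tail_rv[OF assms(1) Z1 \<open>\<eta> > 0\<close>] by auto
  have "((\<lambda>s. s powr \<kappa>) \<longlongrightarrow> 0) (at 0 within {0..})"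
    by (rule tendsto_zero_powrI) (auto simp: assms(3) eventually_at_filter intro!: always_eventually tendsto_ident_at)
  hence "((\<lambda>s. s powr \<kappa> * real K) \<longlongrightarrow> 0 * real K) (at 0 within {0..})"
    by (intro tendsto_mult) auto
  hence ev1: "eventually (\<lambda>s. s powr \<kappa> * real K < c) (at 0 within {0..})"
    using assms(8) by (intro order_tendstoD) auto
  have ev2: "eventually (\<lambda>s. 0 < s) (at (0::real) within {0..})"
    unfolding eventually_at_filter by (auto intro!: always_eventually)
  show "eventually (\<lambda>s. measure N {\<omega>\<in>space N. c < \<bar>X 0 \<omega> - X s \<omega>\<bar>} < \<eta>) (at 0 within {0..})"
    using ev1 ev2
  proof eventually_elim
    case (elim s)
    define a where "a = - ln s"
    have ea: "exp (- a) = s" unfolding a_def using elim by simp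
    have as: "a + ln s = 0" unfolding a_def by simp
    let ?Y = "\<lambda>t \<omega>. t powr \<kappa> * exp (- \<kappa> * \<zeta> (a + ln t) \<omega>) * Z (exp (\<zeta> (a + ln t) \<omega>)) \<omega>"
    have fdd: "fdd_eq N X M ?Y {exp (- a)..}" using assms(7) unfolding associated_proc_def by blast
    let ?S = "{\<omega>\<in>space M. real K < \<bar>Z 1 \<omega>\<bar>}"
    have SM: "?S \<in> sets M" using Z1 by measurable
    have "emeasure N {\<omega>\<in>space N. c < \<bar>(\<lambda>i\<in>{..<1::nat}. X ((\<lambda>_. s) i) \<omega>) 0\<bar>} \<le> emeasure M ?S"
    proof (rule fdd_transfer[OF fdd _ _ set_meas_one _ SM])
      show "\<forall>i<1. s \<in> {exp (- a)..}" using ea by simp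
      show "\<forall>i<1. X s \<in> borel_measurable N" using assms(6) elim unfolding is_process_def by auto
      show "{\<omega> \<in> space M. c < \<bar>(\<lambda>i\<in>{..<1::nat}. ?Y ((\<lambda>_. s) i) \<omega>) 0\<bar>} \<subseteq> ?S"
      proof safe
        fix \<omega> assume w: "\<omega> \<in> space M" "c < \<bar>(\<lambda>i\<in>{..<1::nat}. ?Y ((\<lambda>_. s) i) \<omega>) 0\<bar>"
        have z0: "\<zeta> 0 \<omega> = 0" using assms(5) w(1) unfolding subordinator_def by auto
        have "c < \<bar>s powr \<kappa> * Z 1 \<omega>\<bar>" using w(2) by (simp add: as z0)
        hence "c < s powr \<kappa> * \<bar>Z 1 \<omega>\<bar>" by (simp add: abs_mult)
        show "real K < \<bar>Z 1 \<omega>\<bar>"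
        proof (rule ccontr)
          assume "\<not> real K < \<bar>Z 1 \<omega>\<bar>"
          hence "s powr \<kappa> * \<bar>Z 1 \<omega>\<bar> \<le> s powr \<kappa> * real K" by (intro mult_left_mono) auto
          thus False using \<open>c < s powr \<kappa> * \<bar>Z 1 \<omega>\<bar>\<close> elim by linarith
        qed
      qed
    qed
    moreover have "{\<omega>\<in>space N. c < \<bar>(\<lambda>i\<in>{..<1::nat}. X ((\<lambda>_. s) i) \<omega>) 0\<bar>}
        = {\<omega>\<in>space N. c < \<bar>X 0 \<omega> - X s \<omega>\<bar>}"
      using assms(7) unfolding associated_proc_def by auto
    ultimately have "measure N {\<omega>\<in>space N. c < \<bar>X 0 \<omega> - X s \<omega>\<bar>} \<le> measure M ?S"
      by (simp add: N.emeasure_eq_measure M.emeasure_eq_measure)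
    thus ?case using K by linarith
  qed
qed

lemma case_pos:
  fixes M :: "'a measure" and N :: "'b measure"
    and \<kappa> :: real and Z \<zeta> :: "real \<Rightarrow> 'a \<Rightarrow> real" and X :: "real \<Rightarrow> 'b \<Rightarrow> real"
  assumes "prob_space M" "prob_space N" "\<kappa> > 0" "is_process M Z" "subordinator M \<zeta>"
    "is_process N X" "associated_proc M \<kappa> Z \<zeta> N X" "c > 0" "cadlag M Z"
    "laplace_exponent M \<zeta> \<psi>" "\<psi> \<kappa> = \<kappa>" "t > 0"
  shows "((\<lambda>s. measure N {\<omega>\<in>space N. c < \<bar>X t \<omega> - X s \<omega>\<bar>}) \<longlongrightarrow> 0) (at t within {0..})"
proof (rule tendsto_measure0)
  interpret M: prob_space M by fact
  interpret N: prob_space N by fact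
  fix \<eta> :: real assume "\<eta> > 0"
  have Z1: "Z 1 \<in> borel_measurable M" using assms(4) unfolding is_process_def by auto
  obtain K :: nat where K: "measure M {\<omega>\<in>space M. real K < \<bar>Z 1 \<omega>\<bar>} < \<eta> / 4"
    using tail_rv[OF assms(1) Z1, of "\<eta> / 4"] \<open>\<eta> > 0\<close> by auto
  define C where "C = (2 * t) powr \<kappa>"
  have C0: "0 \<le> C" unfolding C_def by simp
  define e where "e = c / (3 * (C + 1))"
  have e0: "e > 0" unfolding e_def using C0 assms(8) by simp
  have Ce: "C * e < c / 3"
  proof -
    have "C * e = c / 3 * (C / (C + 1))" unfolding e_def using C0 by (simp add: field_simps)
    also have "\<dots> < c / 3 * 1" using C0 assms(8) by (intro mult_strict_left_mono) auto
    finally show ?thesis by simp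
  qed
  obtain \<delta> B where \<delta>: "\<delta> > 0" "B \<in> sets M" "measure M B < \<eta> / 4"
      "\<And>\<omega> x. \<omega> \<in> space M - B \<Longrightarrow> 1 \<le> x \<Longrightarrow> x < 1 + \<delta> \<Longrightarrow> \<bar>Z x \<omega> - Z 1 \<omega>\<bar> \<le> e"
  proof -
    obtain \<delta> where "\<delta> > 0" and "\<exists>B\<in>sets M. measure M B < \<eta> / 4 \<and>
           (\<forall>\<omega>\<in>space M - B. \<forall>x. 1 \<le> x \<and> x < 1 + \<delta> \<longrightarrow> \<bar>Z x \<omega> - Z 1 \<omega>\<bar> \<le> e)"
      using rc_sets[OF assms(9,4) M.finite_measure_axioms e0, of "\<eta> / 4"] \<open>\<eta> > 0\<close> by auto
    then obtain B where "B \<in> sets M" "measure M B < \<eta> / 4"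
        "\<forall>\<omega>\<in>space M - B. \<forall>x. 1 \<le> x \<and> x < 1 + \<delta> \<longrightarrow> \<bar>Z x \<omega> - Z 1 \<omega>\<bar> \<le> e" by auto
    thus ?thesis using that[of \<delta> B] \<open>\<delta> > 0\<close> by auto
  qed
  define \<rho> where "\<rho> = min (ln (1 + \<delta>)) (c / (3 * (C * \<kappa> * real K + 1)))"
  have CK0: "0 \<le> C * \<kappa> * real K" using C0 assms(3) by simp
  have \<rho>0: "\<rho> > 0" unfolding \<rho>_def using \<delta>(1) CK0 assms(8) by simp
  have \<rho>exp: "exp \<rho> \<le> 1 + \<delta>" unfolding \<rho>_def using \<delta>(1)
    by (metis exp_ln exp_le_cancel_iff min.cobounded1 add_pos_pos zero_less_one)
  have \<rho>K: "C * \<kappa> * \<rho> * real K \<le> c / 3"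
  proof -
    have "C * \<kappa> * \<rho> * real K = \<rho> * (C * \<kappa> * real K)" by simp
    also have "\<dots> \<le> c / (3 * (C * \<kappa> * real K + 1)) * (C * \<kappa> * real K)"
      using CK0 unfolding \<rho>_def by (intro mult_right_mono) auto
    also have "\<dots> = c / 3 * ((C * \<kappa> * real K) / (C * \<kappa> * real K + 1))"
      using CK0 by (simp add: field_simps)
    also have "\<dots> \<le> c / 3 * 1" using CK0 assms(8) by (intro mult_left_mono) auto
    finally show ?thesis by simp
  qed
  define D where "D = 1 - exp (- \<kappa> * \<rho>)"
  have D0: "D > 0" unfolding D_def using \<rho>0 assms(3) by simp
  define h0 where "h0 = \<eta> * D / (4 * \<kappa>)"
  have h00: "h0 > 0" unfolding h0_def using D0 assms(3) \<open>\<eta> > 0\<close> by simp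
  have id: "((\<lambda>s. s) \<longlongrightarrow> t) (at t within {0..})" by (rule tendsto_ident_at)
  have ev1: "eventually (\<lambda>s. dist s t < t) (at t within {0..})" using tendstoD[OF id assms(12)] .
  have "((\<lambda>s. ln s) \<longlongrightarrow> ln t) (at t within {0..})" using id assms(12) by (intro tendsto_ln) auto
  hence ev2: "eventually (\<lambda>s. dist (ln s) (ln t) < h0) (at t within {0..})" using h00 by (rule tendstoD)
  have "((\<lambda>s. s powr \<kappa>) \<longlongrightarrow> t powr \<kappa>) (at t within {0..})" using id assms(12) by (intro tendsto_powr) auto
  hence ev3: "eventually (\<lambda>s. dist (s powr \<kappa>) (t powr \<kappa>) < c / (3 * (real K + 1))) (at t within {0..})"
    using assms(8) by (intro tendstoD) auto
  show "eventually (\<lambda>s. measure N {\<omega>\<in>space N. c < \<bar>X t \<omega> - X s \<omega>\<bar>} < \<eta>) (at t within {0..})"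
    using ev1 ev2 ev3
  proof eventually_elim
    case (elim s)
    have s0: "0 < s" "s < 2 * t" using elim(1) unfolding dist_real_def by auto
    define m where "m = min s t"
    define Mp where "Mp = max s t"
    have m0: "0 < m" "m \<le> Mp" "Mp < 2 * t" unfolding m_def Mp_def using s0 assms(12) by auto
    define a where "a = - ln m"
    have ea: "exp (- a) = m" unfolding a_def using m0 by simp
    have am: "a + ln m = 0" unfolding a_def by simp
    define h where "h = a + ln Mp"
    have hdef: "h = \<bar>ln s - ln t\<bar>" unfolding h_def a_def m_def Mp_def using s0 assms(12)
      by (cases "s \<le> t") auto
    have h0': "0 \<le> h" "h < h0" using elim(2) unfolding hdef dist_real_def by auto
    have pK: "\<bar>Mp powr \<kappa> - m powr \<kappa>\<bar> * real K \<le> c / 3"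
    proof -
      have "\<bar>Mp powr \<kappa> - m powr \<kappa>\<bar> = \<bar>s powr \<kappa> - t powr \<kappa>\<bar>" unfolding m_def Mp_def
        by (cases "s \<le> t") auto
      hence lt: "\<bar>Mp powr \<kappa> - m powr \<kappa>\<bar> < c / (3 * (real K + 1))" using elim(3) by (simp add: dist_real_def)
      have "\<bar>Mp powr \<kappa> - m powr \<kappa>\<bar> * real K \<le> c / (3 * (real K + 1)) * real K"
        using lt by (intro mult_right_mono) auto
      also have "\<dots> = c / 3 * (real K / (real K + 1))" by (simp add: field_simps)
      also have "\<dots> \<le> c / 3 * 1" using assms(8) by (intro mult_left_mono) auto
      finally show ?thesis by simp
    qed
    have PC: "Mp powr \<kappa> \<le> C" unfolding C_def using m0 assms(3) by (intro powr_mono2) auto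
    let ?Y = "\<lambda>t \<omega>. t powr \<kappa> * exp (- \<kappa> * \<zeta> (a + ln t) \<omega>) * Z (exp (\<zeta> (a + ln t) \<omega>)) \<omega>"
    have fdd: "fdd_eq N X M ?Y {exp (- a)..}" using assms(7) unfolding associated_proc_def by blast
    let ?A1 = "{\<omega>\<in>space M. real K < \<bar>Z 1 \<omega>\<bar>}"
    let ?A3 = "{\<omega>\<in>space M. \<rho> \<le> \<zeta> h \<omega>}"
    have zh: "\<zeta> h \<in> borel_measurable M" using assms(5) h0' unfolding subordinator_def is_process_def by auto
    have A1: "?A1 \<in> sets M" using Z1 by measurable
    have A3: "?A3 \<in> sets M" using zh by measurable
    have SM: "?A1 \<union> B \<union> ?A3 \<in> sets M" using A1 A3 \<delta>(2) by auto
    let ?ts = "\<lambda>i::nat. if i = 0 then t else s"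
    have "emeasure N {\<omega>\<in>space N. c < \<bar>(\<lambda>i\<in>{..<2::nat}. X (?ts i) \<omega>) 0 - (\<lambda>i\<in>{..<2::nat}. X (?ts i) \<omega>) 1\<bar>}
          \<le> emeasure M (?A1 \<union> B \<union> ?A3)"
    proof (rule fdd_transfer[OF fdd _ _ set_meas_diff _ SM])
      show "\<forall>i<2. ?ts i \<in> {exp (- a)..}" using ea unfolding m_def by auto
      show "\<forall>i<2. X (?ts i) \<in> borel_measurable N" using assms(6,12) s0 unfolding is_process_def by auto
      show "{\<omega> \<in> space M. c < \<bar>(\<lambda>i\<in>{..<2::nat}. ?Y (?ts i) \<omega>) 0 - (\<lambda>i\<in>{..<2::nat}. ?Y (?ts i) \<omega>) 1\<bar>}
            \<subseteq> ?A1 \<union> B \<union> ?A3"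
      proof
        fix \<omega> assume w: "\<omega> \<in> {\<omega> \<in> space M. c < \<bar>(\<lambda>i\<in>{..<2::nat}. ?Y (?ts i) \<omega>) 0 - (\<lambda>i\<in>{..<2::nat}. ?Y (?ts i) \<omega>) 1\<bar>}"
        hence wsp: "\<omega> \<in> space M" and big: "c < \<bar>?Y t \<omega> - ?Y s \<omega>\<bar>" by auto
        show "\<omega> \<in> ?A1 \<union> B \<union> ?A3"
        proof (rule ccontr)
          assume "\<omega> \<notin> ?A1 \<union> B \<union> ?A3"
          hence n1: "\<bar>Z 1 \<omega>\<bar> \<le> real K" and n2: "\<omega> \<in> space M - B" and n3: "\<zeta> h \<omega> < \<rho>"
            using wsp by auto
          have z0: "\<zeta> 0 \<omega> = 0" using assms(5) wsp unfolding subordinator_def by auto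
          have zhnn: "0 \<le> \<zeta> h \<omega>" using assms(5) wsp h0' unfolding subordinator_def by auto
          have "exp (\<zeta> h \<omega>) < 1 + \<delta>" using n3 \<rho>exp by (meson exp_less_cancel_iff less_le_trans)
          hence zx: "\<bar>Z (exp (\<zeta> h \<omega>)) \<omega> - Z 1 \<omega>\<bar> \<le> e" using \<delta>(4)[OF n2] zhnn by auto
          have Ym: "?Y m \<omega> = m powr \<kappa> * Z 1 \<omega>" by (simp add: am z0)
          have YM: "?Y Mp \<omega> = Mp powr \<kappa> * exp (- \<kappa> * \<zeta> h \<omega>) * Z (exp (\<zeta> h \<omega>)) \<omega>" by (simp add: h_def)
          have "\<bar>?Y Mp \<omega> - ?Y m \<omega>\<bar> \<le> c"
            unfolding Ym YM
            by (rule pw[OF assms(3) zhnn n3 zx n1 _ PC Ce pK \<rho>K]) simp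
          moreover have "\<bar>?Y t \<omega> - ?Y s \<omega>\<bar> = \<bar>?Y Mp \<omega> - ?Y m \<omega>\<bar>"
            unfolding m_def Mp_def by (cases "s \<le> t") (auto simp: abs_minus_commute)
          ultimately show False using big by linarith
        qed
      qed
    qed
    moreover have "{\<omega>\<in>space N. c < \<bar>(\<lambda>i\<in>{..<2::nat}. X (?ts i) \<omega>) 0 - (\<lambda>i\<in>{..<2::nat}. X (?ts i) \<omega>) 1\<bar>}
        = {\<omega>\<in>space N. c < \<bar>X t \<omega> - X s \<omega>\<bar>}" by auto
    ultimately have "measure N {\<omega>\<in>space N. c < \<bar>X t \<omega> - X s \<omega>\<bar>} \<le> measure M (?A1 \<union> B \<union> ?A3)"
      by (simp add: N.emeasure_eq_measure M.emeasure_eq_measure)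
    also have "\<dots> \<le> measure M ?A1 + measure M B + measure M ?A3"
      using measure_Un_le[of "?A1 \<union> B" M ?A3] measure_Un_le[of ?A1 M B] A1 A3 \<delta>(2) by auto
    finally have fin: "measure N {\<omega>\<in>space N. c < \<bar>X t \<omega> - X s \<omega>\<bar>} \<le> measure M ?A1 + measure M B + measure M ?A3" .
    have "measure M ?A3 \<le> \<kappa> * h / D"
      unfolding D_def by (rule tail_sub[OF assms(1,5,10,11,3) h0'(1) \<rho>0])
    also have "\<kappa> * h / D < \<eta> / 4"
    proof -
      have "\<kappa> * h < \<kappa> * h0" using h0' assms(3) by simp
      also have "\<kappa> * h0 = \<eta> / 4 * D" unfolding h0_def using assms(3) by simp
      finally show ?thesis using D0 by (simp add: field_simps)
    qed
    finally show ?case using K \<delta>(3) fin \<open>\<eta> > 0\<close> by linarith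
  qed
qed

theorem proposition3p2:
  fixes M :: "'a measure" and N :: "'b measure"
    and \<kappa> :: real and Z \<zeta> :: "real \<Rightarrow> 'a \<Rightarrow> real" and \<psi> :: "real \<Rightarrow> real"
    and X :: "real \<Rightarrow> 'b \<Rightarrow> real"
  assumes "prob_space M" and "prob_space N"
    and "\<kappa> > 0"
    and "cadlag M Z" and "markov_proc M Z" and "martingale_proc M Z" and "self_similar M \<kappa> Z"
    and "subordinator M \<zeta>" and "laplace_exponent M \<zeta> \<psi>" and "\<psi> \<kappa> = \<kappa>"
    and "indep_procs M Z \<zeta>"
    and "is_process N X" and "associated_proc M \<kappa> Z \<zeta> N X"
    and "cont_in_prob M Z"
  shows "cont_in_prob N X"
  unfolding cont_in_prob_def
proof (intro allI impI)
  fix t c :: real assume t: "t \<ge> 0" and c: "c > 0"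
  have ZP: "is_process M Z" using assms(6) unfolding martingale_proc_def by auto
  show "((\<lambda>s. measure N {\<omega>\<in>space N. c < \<bar>X t \<omega> - X s \<omega>\<bar>}) \<longlongrightarrow> 0) (at t within {0..})"
  proof (cases "t = 0")
    case True
    thus ?thesis using case_zero[OF assms(1,2,3) ZP assms(8,12,13) c] by simp
  next
    case False
    hence "t > 0" using t by simp
    thus ?thesis using case_pos[OF assms(1,2,3) ZP assms(8,12,13) c assms(4,9,10)] by simp
  qed
qed

end
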